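(* For every integer $n\ge 3$, the sum of all principal minors of order $n-1$ of $L_S$ equals $$\sum_{i=1}^{n}\det(L_S[i])=\frac{n}{2\sqrt{3}}\,(p^{n}-q^{n}),$$ where $L_S[i]$ is the matrix obtained from $L_S$ by deleting its $i$-th row and $i$-th column. Equivalently, if $\det(xI-L_S)=x^n+a_1x^{n-1}+\dots+a_{n-1}x+a_n$, then $(-1)^{n-1}a_{n-1}=\frac{n}{2\sqrt3}(p^n-q^n)$.
   Context: $p=2+\sqrt3$, $q=2-\sqrt3$. $L_S$ denotes the $n\times n$ matrix with all diagonal entries equal to $4$, entries $(i,i+1)$ and $(i+1,i)$ equal to $-1$ for $1\le i\le n-1$, entries $(1,n)$ and $(n,1)$ equal to $+1$, and all other entries $0$. *)

theory Defs
  imports "Jordan_Normal_Form.Determinant"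
begin

text \<open>The n x n matrix L_S (0-indexed: paper's row i is index i-1):
  diagonal 4, sub/super-diagonal -1, corners (1,n),(n,1) equal to +1.\<close>
definition L_S :: "nat \<Rightarrow> real mat" where
  "L_S n = mat n n (\<lambda>(i, j).
      if i = j then 4
      else if j = i + 1 \<or> i = j + 1 then -1
      else if (i = 0 \<and> j = n - 1) \<or> (i = n - 1 \<and> j = 0) then 1
      else 0)"

end

theory Submission
  imports Defs
begin

lemma det_perm2:
  assumes A: "A \<in> carrier_mat m m" and p: "p permutes {0..<m}"
  shows "det (mat m m (\<lambda>(k,l). A $$ (p k, p l))) = det A"
proof -
  let ?C = "mat m m (\<lambda>(k,l). A $$ (p k, l))"
  have C: "?C \<in> carrier_mat m m" by simp
  have 1: "det ?C = signof p * det A" by (rule det_permute_rows[OF A p])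
  have CT: "transpose_mat ?C \<in> carrier_mat m m" by simp
  have 2: "det (mat m m (\<lambda>(k,l). transpose_mat ?C $$ (p k, l))) = signof p * det (transpose_mat ?C)"
    by (rule det_permute_rows[OF CT p])
  have e: "mat m m (\<lambda>(k,l). transpose_mat ?C $$ (p k, l)) = transpose_mat (mat m m (\<lambda>(k,l). A $$ (p k, p l)))"
    using p by (intro eq_matI) (auto simp: permutes_in_image)
  have "det (mat m m (\<lambda>(k,l). A $$ (p k, p l))) = det (transpose_mat (mat m m (\<lambda>(k,l). A $$ (p k, p l))))"
    by (rule det_transpose[symmetric, of _ m]) simp
  also have "\<dots> = signof p * det (transpose_mat ?C)" using 2 e by simp
  also have "\<dots> = signof p * (signof p * det A)" using det_transpose[OF C] 1 by simp
  also have "\<dots> = det A" by (simp add: sign_def)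
  finally show ?thesis .
qed

lemma det_sign2:
  fixes B :: "real mat"
  assumes B: "B \<in> carrier_mat m m" and s: "\<And>k. s k = 1 \<or> s k = -1"
  shows "det (mat m m (\<lambda>(k,l). s k * s l * B $$ (k, l))) = det B"
proof -
  have "\<And>q. q permutes {0..<m} \<Longrightarrow>
     (\<Prod>i = 0..<m. s i * s (q i) * B $$ (i, q i)) = (\<Prod>i = 0..<m. B $$ (i, q i))"
  proof -
    fix q assume q: "q permutes {0..<m}"
    have "(\<Prod>i = 0..<m. s i * s (q i) * B $$ (i, q i)) =
       (\<Prod>i = 0..<m. s i) * (\<Prod>i = 0..<m. s (q i)) * (\<Prod>i = 0..<m. B $$ (i, q i))"
      by (simp add: prod.distrib)
    also have "(\<Prod>i = 0..<m. s (q i)) = (\<Prod>i = 0..<m. s i)"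
      using prod.permute[OF q, of s] by (simp add: o_def)
    also have "(\<Prod>i = 0..<m. s i) * (\<Prod>i = 0..<m. s i) = (\<Prod>i = 0..<m. s i * s i)"
      by (simp add: prod.distrib)
    also have "\<dots> = 1" proof (rule prod.neutral, intro ballI) fix x show "s x * s x = 1" using s[of x] by auto qed
    finally show "(\<Prod>i = 0..<m. s i * s (q i) * B $$ (i, q i)) = (\<Prod>i = 0..<m. B $$ (i, q i))" by simp
  qed
  note h = this
  have "\<And>q i. q permutes {0..<m} \<Longrightarrow> i \<in> {0..<m} \<Longrightarrow> q i < m"
    using permutes_in_image by fastforce
  then have h2: "\<And>q. q permutes {0..<m} \<Longrightarrow>
     (\<Prod>i = 0..<m. mat m m (\<lambda>(k,l). s k * s l * B $$ (k, l)) $$ (i, q i)) = (\<Prod>i = 0..<m. s i * s (q i) * B $$ (i, q i))"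
    by (intro prod.cong) auto
  have M: "mat m m (\<lambda>(k,l). s k * s l * B $$ (k, l)) \<in> carrier_mat m m" by simp
  show ?thesis unfolding det_def'[OF B] det_def'[OF M]
    by (intro sum.cong refl) (simp add: h h2)
qed

definition T :: "nat \<Rightarrow> real mat" where
  "T m = mat m m (\<lambda>(k,l). if k = l then 4 else if k = l + 1 \<or> l = k + 1 then -1 else 0)"

lemma T_carrier[simp]: "T m \<in> carrier_mat m m" by (simp add: T_def)

lemma T_rec: "det (T (Suc (Suc m))) = 4 * det (T (Suc m)) - det (T m)"
proof -
  let ?A = "T (Suc (Suc m))"
  let ?N = "mat_delete ?A (Suc m) m"
  have d1: "mat_delete ?A (Suc m) (Suc m) = T (Suc m)"
    by (intro eq_matI) (auto simp: T_def mat_delete_def)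
  have N: "?N \<in> carrier_mat (Suc m) (Suc m)"
    using mat_delete_carrier[OF T_carrier[of "Suc (Suc m)"]] by simp
  have d2: "mat_delete ?N m m = T m"
    by (intro eq_matI) (auto simp: T_def mat_delete_def)
  have "det ?N = (\<Sum>i<Suc m. ?N $$ (i,m) * cofactor ?N i m)"
    by (rule laplace_expansion_column[OF N]) simp
  also have "\<dots> = (\<Sum>i<m. ?N $$ (i,m) * cofactor ?N i m) + ?N $$ (m,m) * cofactor ?N m m"
    by simp
  also have "(\<Sum>i<m. ?N $$ (i,m) * cofactor ?N i m) = 0"
    by (intro sum.neutral) (auto simp: T_def mat_delete_def)
  also have "?N $$ (m,m) = -1" by (simp add: T_def mat_delete_def)
  also have "cofactor ?N m m = det (T m)" unfolding cofactor_def d2 by simp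
  finally have dN: "det ?N = - det (T m)" by simp
  have "det ?A = (\<Sum>j<Suc (Suc m). ?A $$ (Suc m,j) * cofactor ?A (Suc m) j)"
    by (rule laplace_expansion_row[OF T_carrier]) simp
  also have "\<dots> = (\<Sum>j<m. ?A $$ (Suc m,j) * cofactor ?A (Suc m) j)
     + ?A $$ (Suc m, m) * cofactor ?A (Suc m) m + ?A $$ (Suc m, Suc m) * cofactor ?A (Suc m) (Suc m)"
    by simp
  also have "(\<Sum>j<m. ?A $$ (Suc m,j) * cofactor ?A (Suc m) j) = 0"
    by (intro sum.neutral) (auto simp: T_def)
  also have "?A $$ (Suc m, m) = -1" by (simp add: T_def)
  also have "?A $$ (Suc m, Suc m) = 4" by (simp add: T_def)
  also have "cofactor ?A (Suc m) (Suc m) = det (T (Suc m))" unfolding cofactor_def d1 by simp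
  also have "cofactor ?A (Suc m) m = det (T m)" unfolding cofactor_def dN by simp
  finally show ?thesis by simp
qed

lemma T0: "det (T 0) = 1" by (rule det_dim_zero) simp

lemma T1: "det (T 1) = 4"
proof -
  have h: "det (mat_delete (T 1) 0 0) = 1"
    by (rule det_dim_zero) (use mat_delete_carrier[OF T_carrier[of 1]] in simp)
  have e: "T 1 $$ (0,0) = 4" by (simp add: T_def)
  have "det (T 1) = (\<Sum>j<1. T 1 $$ (0,j) * cofactor (T 1) 0 j)"
    by (rule laplace_expansion_row[OF T_carrier]) simp
  also have "\<dots> = T 1 $$ (0,0) * cofactor (T 1) 0 0" by simp
  also have "\<dots> = 4" unfolding e cofactor_def h by simp
  finally show ?thesis .
qed

lemma div_aux: fixes a b c d e :: real
  shows "4 * ((a - b) / e) - (c - d) / e = ((4 * a - c) - (4 * b - d)) / e"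
  by (cases "e = 0") (simp_all add: field_simps)

lemma pow_rec: fixes x :: real assumes "x ^ 2 = 4 * x - 1"
  shows "x ^ (j + 3) = 4 * x ^ (j + 2) - x ^ (j + 1)"
proof -
  have "x ^ (j + 3) = x ^ ((j+1) + 2)" by (simp add: numeral_3_eq_3)
  also have "\<dots> = x ^ (j+1) * x ^ 2" by (rule power_add)
  also have "\<dots> = x ^ (j+1) * (4 * x - 1)" using assms by simp
  also have "\<dots> = 4 * (x ^ (j+1) * x) - x ^ (j+1)" by (simp add: algebra_simps)
  also have "x ^ (j+1) * x = x ^ (j+2)" by simp
  finally show ?thesis .
qed

lemma T_closed: "det (T m) = ((2 + sqrt 3) ^ Suc m - (2 - sqrt 3) ^ Suc m) / (2 * sqrt 3)"
proof (induction m rule: less_induct)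
  case (less m)
  have p2: "(2 + sqrt 3) ^ 2 = 4 * (2 + sqrt 3) - 1" by (simp add: power2_sum)
  have q2: "(2 - sqrt 3) ^ 2 = 4 * (2 - sqrt 3) - 1" by (simp add: power2_diff)
  show ?case
  proof (cases m)
    case 0 then show ?thesis using T0 by simp
  next
    case (Suc k) note k = this
    show ?thesis
    proof (cases k)
      case 0
      have "(2 + sqrt 3) ^ 2 - (2 - sqrt 3) ^ 2 = 8 * sqrt 3" by (simp add: power2_sum power2_diff)
      then show ?thesis using T1 k 0 by (simp add: numeral_2_eq_2[symmetric])
    next
      case (Suc j)
      have m: "m = j + 2" using k Suc by simp
      have "det (T m) = 4 * det (T (j+1)) - det (T j)" using k Suc T_rec by simp
      also have "\<dots> = 4 * (((2 + sqrt 3) ^ (j+2) - (2 - sqrt 3) ^ (j+2)) / (2 * sqrt 3))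
           - ((2 + sqrt 3) ^ (j+1) - (2 - sqrt 3) ^ (j+1)) / (2 * sqrt 3)"
      proof -
        have e1: "Suc (j+1) = j+2" "Suc j = j + 1" by simp_all
        have "det (T (j+1)) = ((2 + sqrt 3) ^ (j+2) - (2 - sqrt 3) ^ (j+2)) / (2 * sqrt 3)"
          using less.IH[of "j+1"] m unfolding e1(1) by linarith
        moreover have "det (T j) = ((2 + sqrt 3) ^ (j+1) - (2 - sqrt 3) ^ (j+1)) / (2 * sqrt 3)"
          using less.IH[of "j"] m unfolding e1(2) by linarith
        ultimately show ?thesis by (simp only:)
      qed
      also have "\<dots> = ((4 * (2 + sqrt 3) ^ (j+2) - (2 + sqrt 3) ^ (j+1))
           - (4 * (2 - sqrt 3) ^ (j+2) - (2 - sqrt 3) ^ (j+1))) / (2 * sqrt 3)"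
        by (rule div_aux)
      also have "\<dots> = ((2 + sqrt 3) ^ (j+3) - (2 - sqrt 3) ^ (j+3)) / (2 * sqrt 3)"
        unfolding pow_rec[OF p2] pow_rec[OF q2] ..
      also have "j + 3 = Suc m" using m by simp
      finally show ?thesis .
    qed
  qed
qed

lemma entry_arith:
  fixes i k l m :: nat
  assumes m: "m \<ge> 2" and i: "i \<le> m" and k: "k < m" and l: "l < m"
  defines "vk \<equiv> (if i + k < m then i + k + 1 else i + k - m)"
      and "vl \<equiv> (if i + l < m then i + l + 1 else i + l - m)"
  shows "((if i + k < m then 1 else -1) * (if i + l < m then 1 else -1)) *
     (if vk = vl then 4 else if vl = vk + 1 \<or> vk = vl + 1 then -1
      else if (vk = 0 \<and> vl = m) \<or> (vk = m \<and> vl = 0) then 1 else (0::real))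
   = (if k = l then 4 else if k = l + 1 \<or> l = k + 1 then -1 else 0)"
proof -
  let ?adj = "vl = vk + 1 \<or> vk = vl + 1"
  let ?cor = "(vk = 0 \<and> vl = m) \<or> (vk = m \<and> vl = 0)"
  consider (a) "i + k < m" "i + l < m" | (b) "i + k < m" "\<not> i + l < m"
    | (c) "\<not> i + k < m" "i + l < m" | (d) "\<not> i + k < m" "\<not> i + l < m" by blast
  then show ?thesis
  proof cases
    case a
    have e: "vk = i + k + 1" "vl = i + l + 1" using a unfolding vk_def vl_def by simp_all
    have c1: "(vk = vl) = (k = l)" using e by arith
    have c2: "?adj = (k = l + 1 \<or> l = k + 1)" using e by arith
    have c3: "\<not> ?cor" using e a by arith
    show ?thesis using a c3 by (simp only: c1 c2 if_True if_False mult_1 mult_1_right)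
  next
    case b
    have e: "vk = i + k + 1" "vl = i + l - m" using b unfolding vk_def vl_def by simp_all
    have c1: "vk \<noteq> vl" "k \<noteq> l" using e b l by arith+
    have c2: "\<not> ?adj" "k \<noteq> l + 1" using e b l by arith+
    have c3: "?cor = (l = k + 1)" using e b k l by arith
    show ?thesis using b c1 c2 by (simp add: c3)
  next
    case c
    have e: "vk = i + k - m" "vl = i + l + 1" using c unfolding vk_def vl_def by simp_all
    have c1: "vk \<noteq> vl" "k \<noteq> l" using e c k by arith+
    have c2: "\<not> ?adj" "l \<noteq> k + 1" using e c k by arith+
    have c3: "?cor = (k = l + 1)" using e c k l by arith
    show ?thesis using c c1 c2 by (simp add: c3)
  next
    case d
    have e: "vk = i + k - m" "vl = i + l - m" using d unfolding vk_def vl_def by simp_all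
    have c1: "(vk = vl) = (k = l)" using e d by arith
    have c2: "?adj = (k = l + 1 \<or> l = k + 1)" using e d by arith
    have c3: "\<not> ?cor" using e d k l i by arith
    show ?thesis using d c3 by (simp only: c1 c2 if_True if_False mult_minus1 minus_minus mult_1)
  qed
qed

lemma rot_perm:
  fixes i m :: nat assumes m: "m > 0" and im: "i \<le> m"
  shows "(\<lambda>k. if k < m then (i + k) mod m else k) permutes {0..<m}"
proof (rule bij_imp_permutes)
  let ?p = "\<lambda>k. if k < m then (i + k) mod m else k"
  have inj: "inj_on ?p {0..<m}"
  proof (rule inj_onI)
    fix x y assume x: "x \<in> {0..<m}" and y: "y \<in> {0..<m}" and e: "?p x = ?p y"
    then have "(i + x) mod m = (i + y) mod m" by simp
    moreover have "\<And>z. z < m + m \<Longrightarrow> z mod m = (if z < m then z else z - m)"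
      by (simp add: mod_if le_mod_geq)
    moreover have "i + x < m + m" "i + y < m + m" using x y im by auto
    ultimately have "(if i + x < m then i + x else i + x - m) = (if i + y < m then i + y else i + y - m)"
      by metis
    then show "x = y" using x y im by (auto split: if_splits)
  qed
  have sub: "?p ` {0..<m} \<subseteq> {0..<m}" using m by auto
  have "?p ` {0..<m} = {0..<m}" by (rule endo_inj_surj[OF _ sub inj]) simp
  then show "bij_betw ?p {0..<m} {0..<m}" using inj by (simp add: bij_betw_def)
qed simp

lemma minor_eq:
  assumes n: "n \<ge> 3" and i: "i < n"
  shows "det (mat_delete (L_S n) i i) = det (T (n - 1))"
proof -
  define m where "m = n - 1"
  have m2: "m \<ge> 2" and im: "i \<le> m" and nm: "n = Suc m" using n i by (auto simp: m_def)
  define A where "A = mat_delete (L_S n) i i"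
  have A: "A \<in> carrier_mat m m" unfolding A_def m_def
    by (rule mat_delete_carrier) (simp add: L_S_def)
  define p where "p = (\<lambda>k. if k < m then (i + k) mod m else k)"
  have p: "p permutes {0..<m}" unfolding p_def by (rule rot_perm) (use m2 im in simp_all)
  define s :: "nat \<Rightarrow> real" where "s = (\<lambda>k. if i + k < m then 1 else -1)"
  have s: "\<And>k. s k = 1 \<or> s k = -1" by (simp add: s_def)
  define B where "B = mat m m (\<lambda>(k,l). A $$ (p k, p l))"
  have B: "B \<in> carrier_mat m m" by (simp add: B_def)
  have ins: "\<And>k. k < m \<Longrightarrow> (if p k < i then p k else Suc (p k)) =
              (if i + k < m then i + k + 1 else i + k - m)"
  proof -
    fix k assume k: "k < m"
    show "?thesis k"
    proof (cases "i + k < m")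
      case True then show ?thesis using k by (simp add: p_def)
    next
      case False
      then have "(i + k) mod m = i + k - m" using k im by (simp add: mod_if le_mod_geq)
      then show ?thesis using False k im by (simp add: p_def)
    qed
  qed
  have pk: "\<And>k. k < m \<Longrightarrow> p k < m" using m2 by (simp add: p_def)
  have "T m = mat m m (\<lambda>(k,l). s k * s l * B $$ (k, l))"
  proof (rule eq_matI)
    fix k l assume k: "k < dim_row (mat m m (\<lambda>(k,l). s k * s l * B $$ (k, l)))"
      and l: "l < dim_col (mat m m (\<lambda>(k,l). s k * s l * B $$ (k, l)))"
    then have k: "k < m" and l: "l < m" by auto
    have "B $$ (k,l) = A $$ (p k, p l)" using k l by (simp add: B_def)
    also have "\<dots> = L_S n $$ (if p k < i then p k else Suc (p k), if p l < i then p l else Suc (p l))"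
      unfolding A_def mat_delete_def using pk[OF k] pk[OF l] nm by (simp add: L_S_def)
    also have "\<dots> = L_S n $$ (if i + k < m then i + k + 1 else i + k - m, if i + l < m then i + l + 1 else i + l - m)"
      using ins[OF k] ins[OF l] by simp
    also have "\<dots> = (let vk = (if i + k < m then i + k + 1 else i + k - m);
         vl = (if i + l < m then i + l + 1 else i + l - m) in
       (if vk = vl then 4 else if vl = vk + 1 \<or> vk = vl + 1 then -1
      else if (vk = 0 \<and> vl = m) \<or> (vk = m \<and> vl = 0) then 1 else (0::real)))"
    proof -
      have a: "(if i + k < m then i + k + 1 else i + k - m) < n" "(if i + l < m then i + l + 1 else i + l - m) < n"
        using k l nm im by auto
      show ?thesis unfolding Let_def L_S_def using a nm by (simp del: One_nat_def)
    qed
    finally have "s k * s l * B $$ (k, l) = (if k = l then 4 else if k = l + 1 \<or> l = k + 1 then -1 else 0)"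
      using entry_arith[OF m2 im k l] unfolding s_def Let_def by simp
    then show "T m $$ (k, l) = mat m m (\<lambda>(k,l). s k * s l * B $$ (k, l)) $$ (k, l)"
      using k l by (simp add: T_def)
  qed (auto simp: T_def)
  then have "det (T m) = det B" using det_sign2[OF B s] by simp
  also have "det B = det A" unfolding B_def by (rule det_perm2[OF A p])
  finally show ?thesis unfolding A_def m_def by simp
qed

theorem fact1:
  fixes n :: nat
  assumes "n \<ge> 3"
  shows "(\<Sum>i<n. det (mat_delete (L_S n) i i)) =
         real n / (2 * sqrt 3) * ((2 + sqrt 3) ^ n - (2 - sqrt 3) ^ n)"
proof -
  have "(\<Sum>i<n. det (mat_delete (L_S n) i i)) = (\<Sum>i<n. det (T (n - 1)))"
    using minor_eq[OF assms] by simp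
  also have "\<dots> = real n * det (T (n - 1))" by simp
  also have "Suc (n - 1) = n" using assms by simp
  then have "det (T (n - 1)) = ((2 + sqrt 3) ^ n - (2 - sqrt 3) ^ n) / (2 * sqrt 3)"
    using T_closed[of "n - 1"] by simp
  finally show ?thesis by simp
qed

end
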